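(* Let $N\ge1$, let real channel gains $a_{s,r},a_{s,j},a_{r,j}$ ($j=1,\dots,N$) be fixed, and for $\mathbf{P}=(P_s,P_r)\in[0,\infty)^2$ set $\mathsf{SNR}_{s,r}=a_{s,r}^2P_s$, $\mathsf{SNR}_{s,j}=a_{s,j}^2P_s$, $\mathsf{SNR}_{r,j}=a_{r,j}^2P_r$, and $\mathbf{S}(\mathbf{P})=(\mathsf{SNR}_{s,r},\mathsf{SNR}_{s,1},\dots,\mathsf{SNR}_{s,N},\mathsf{SNR}_{r,1},\dots,\mathsf{SNR}_{r,N})$. With $\mathsf{C}(x)=\tfrac12\log(1+x)$, $f_j(\rho,\mathbf{S})=\mathsf{SNR}_{s,j}+\mathsf{SNR}_{r,j}+2\rho\sqrt{\mathsf{SNR}_{s,j}\mathsf{SNR}_{r,j}}$, $g^*_j(\rho,\mathbf{S})=(1-\rho^2)\mathsf{SNR}_{s,r}$ and $R_{DF}(\rho,\mathbf{S})=\min_{1\le j\le N}\min(\mathsf{C}(f_j(\rho,\mathbf{S})),\mathsf{C}(g^*_j(\rho,\mathbf{S})))$, the map $(t,\mathbf{P})\mapsto R_{DF}(\sqrt t,\mathbf{S}(\mathbf{P}))$ is quasi-concave on $[0,1]\times[0,\infty)^2$ (i.e., quasi-concave in $(\rho^2,\mathbf{P})$).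
   Context: Setting: real AWGN multicast relay channel with source $s$, relay $r$ and destinations $1,\dots,N$; $\rho\in[0,1]$ is the source–relay input correlation coefficient. A function $F$ on a convex set is quasi-concave if $F(\lambda x_1+(1-\lambda)x_2)\ge\min(F(x_1),F(x_2))$ for all $x_1,x_2$ and $\lambda\in[0,1]$. *)

theory Defs
  imports "HOL-Analysis.Analysis"
begin

definition quasi_concave_on :: "'a::real_vector set \<Rightarrow> ('a \<Rightarrow> real) \<Rightarrow> bool" where
  "quasi_concave_on S F \<longleftrightarrow>
     (\<forall>x1\<in>S. \<forall>x2\<in>S. \<forall>u::real. 0 \<le> u \<and> u \<le> 1 \<longrightarrow>
        F (u *\<^sub>R x1 + (1 - u) *\<^sub>R x2) \<ge> min (F x1) (F x2))"

definition Ccap :: "real \<Rightarrow> real" where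
  "Ccap x = (1/2) * log 2 (1 + x)"

text \<open>The SNR vector S is represented by its components:
  snr_sr, snr_sd j (= SNR_{s,j}), snr_rd j (= SNR_{r,j}).\<close>
definition f_j :: "real \<Rightarrow> real \<Rightarrow> real \<Rightarrow> real" where
  "f_j \<rho> snr_sj snr_rj = snr_sj + snr_rj + 2 * \<rho> * sqrt (snr_sj * snr_rj)"

definition g_star :: "real \<Rightarrow> real \<Rightarrow> real" where
  "g_star \<rho> snr_sr = (1 - \<rho>^2) * snr_sr"

definition R_DF :: "nat \<Rightarrow> real \<Rightarrow> real \<Rightarrow> (nat \<Rightarrow> real) \<Rightarrow> (nat \<Rightarrow> real) \<Rightarrow> real" where
  "R_DF N \<rho> snr_sr snr_sd snr_rd =
     Min ((\<lambda>j. min (Ccap (f_j \<rho> (snr_sd j) (snr_rd j))) (Ccap (g_star \<rho> snr_sr))) ` {1..N})"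

definition R_DF_P :: "nat \<Rightarrow> real \<Rightarrow> (nat \<Rightarrow> real) \<Rightarrow> (nat \<Rightarrow> real) \<Rightarrow> real \<times> real \<times> real \<Rightarrow> real" where
  "R_DF_P N a_sr a_sd a_rd = (\<lambda>(t, Ps, Pr).
     R_DF N (sqrt t) (a_sr^2 * Ps) (\<lambda>j. (a_sd j)^2 * Ps) (\<lambda>j. (a_rd j)^2 * Pr))"

end

theory Submission
  imports Defs
begin

lemma opp_prod:
  fixes a1 a2 b1 b2 u :: real
  assumes "(a1-a2)*(b1-b2) \<le> 0" "0\<le>u" "u\<le>1"
  shows "u*(a1*b1) + (1-u)*(a2*b2) \<le> (u*a1+(1-u)*a2)*(u*b1+(1-u)*b2)"
proof -
  have e: "(u*a1+(1-u)*a2)*(u*b1+(1-u)*b2) - (u*(a1*b1) + (1-u)*(a2*b2))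
        = - (u*(1-u)) * ((a1-a2)*(b1-b2))" by (simp add: algebra_simps)
  have "0 \<le> u*(1-u)" using assms by simp
  hence "0 \<le> - (u*(1-u)) * ((a1-a2)*(b1-b2))" using assms(1)
    by (simp add: mult_nonneg_nonpos)
  thus ?thesis using e by linarith
qed

lemma cs_step:
  fixes p1 p2 q1 q2 u w :: real
  assumes "0\<le>p1" "0\<le>p2" "0\<le>q1" "0\<le>q2" "0\<le>u" "u\<le>1"
    and "u*q1+(1-u)*q2 \<le> w"
  shows "u* sqrt(p1*q1) + (1-u)* sqrt(p2*q2) \<le> sqrt((u*p1+(1-u)*p2)*w)"
proof -
  define A1 where "A1 = sqrt p1"
  define A2 where "A2 = sqrt p2"
  define B1 where "B1 = sqrt q1"
  define B2 where "B2 = sqrt q2"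
  have p1: "p1 = A1^2" and p2: "p2 = A2^2" and q1: "q1 = B1^2" and q2: "q2 = B2^2"
    using assms by (simp_all add: A1_def A2_def B1_def B2_def)
  have s1: "sqrt(p1*q1) = A1*B1" by (simp add: A1_def B1_def real_sqrt_mult)
  have s2: "sqrt(p2*q2) = A2*B2" by (simp add: A2_def B2_def real_sqrt_mult)
  have e: "(u*p1+(1-u)*p2)*(u*q1+(1-u)*q2) - (u*(A1*B1) + (1-u)*(A2*B2))^2
      = u*(1-u)*(A1*B2-A2*B1)^2"
    unfolding p1 p2 q1 q2 by (simp add: algebra_simps power2_eq_square)
  have "0 \<le> u*(1-u)*(A1*B2-A2*B1)^2" using assms by simp
  hence "(u*(A1*B1) + (1-u)*(A2*B2))^2 \<le> (u*p1+(1-u)*p2)*(u*q1+(1-u)*q2)"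
    using e by linarith
  also have "\<dots> \<le> (u*p1+(1-u)*p2)*w"
    using assms by (intro mult_left_mono) auto
  finally show ?thesis unfolding s1 s2 by (rule real_le_rsqrt)
qed

lemma conc3:
  fixes t1 t2 x1 x2 y1 y2 u :: real
  assumes nn: "0\<le>t1" "0\<le>t2" "0\<le>x1" "0\<le>x2" "0\<le>y1" "0\<le>y2" "0\<le>u" "u\<le>1"
    and opp: "(x1-x2)*(y1-y2) \<le> 0 \<or> (t1-t2)*(y1-y2) \<le> 0 \<or> (t1-t2)*(x1-x2) \<le> 0"
  shows "u* sqrt(t1*x1*y1) + (1-u)* sqrt(t2*x2*y2)
     \<le> sqrt((u*t1+(1-u)*t2)*(u*x1+(1-u)*x2)*(u*y1+(1-u)*y2))"
  using opp
proof (elim disjE)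
  assume h: "(x1-x2)*(y1-y2) \<le> 0"
  have "u* sqrt(t1*(x1*y1)) + (1-u)* sqrt(t2*(x2*y2))
     \<le> sqrt((u*t1+(1-u)*t2)*((u*x1+(1-u)*x2)*(u*y1+(1-u)*y2)))"
    using nn opp_prod[OF h nn(7,8)] by (intro cs_step) auto
  thus ?thesis by (simp add: mult.assoc)
next
  assume h: "(t1-t2)*(y1-y2) \<le> 0"
  have "u* sqrt(x1*(t1*y1)) + (1-u)* sqrt(x2*(t2*y2))
     \<le> sqrt((u*x1+(1-u)*x2)*((u*t1+(1-u)*t2)*(u*y1+(1-u)*y2)))"
    using nn opp_prod[OF h nn(7,8)] by (intro cs_step) auto
  thus ?thesis by (simp add: ac_simps)
next
  assume h: "(t1-t2)*(x1-x2) \<le> 0"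
  have "u* sqrt(y1*(t1*x1)) + (1-u)* sqrt(y2*(t2*x2))
     \<le> sqrt((u*y1+(1-u)*y2)*((u*t1+(1-u)*t2)*(u*x1+(1-u)*x2)))"
    using nn opp_prod[OF h nn(7,8)] by (intro cs_step) auto
  thus ?thesis by (simp add: ac_simps)
qed

lemma fj_eq:
  assumes "0\<le>t" "0\<le>x" "0\<le>y"
  shows "f_j (sqrt t) x y = x + y + 2* sqrt(t*x*y)"
  by (simp add: f_j_def real_sqrt_mult mult.assoc)

lemma fj_mono:
  assumes "0\<le>t" "0\<le>x" "0\<le>y" "t\<le>t'" "x\<le>x'" "y\<le>y'"
  shows "f_j (sqrt t) x y \<le> f_j (sqrt t') x' y'"
proof -
  have "t*x*y \<le> t'*x'*y'" using assms by (intro mult_mono) auto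
  hence s: "sqrt(t*x*y) \<le> sqrt(t'*x'*y')" by simp
  have "0 \<le> t'" "0 \<le> x'" "0 \<le> y'" using assms by linarith+
  thus ?thesis using assms s fj_eq[of t x y] fj_eq[of t' x' y'] by linarith
qed

lemma fj_qc:
  fixes t1 t2 x1 x2 y1 y2 u :: real
  assumes nn: "0\<le>t1" "0\<le>t2" "0\<le>x1" "0\<le>x2" "0\<le>y1" "0\<le>y2" "0\<le>u" "u\<le>1"
  shows "min (f_j (sqrt t1) x1 y1) (f_j (sqrt t2) x2 y2)
     \<le> f_j (sqrt (u*t1+(1-u)*t2)) (u*x1+(1-u)*x2) (u*y1+(1-u)*y2)"
proof (cases "(x1-x2)*(y1-y2) \<le> 0 \<or> (t1-t2)*(y1-y2) \<le> 0 \<or> (t1-t2)*(x1-x2) \<le> 0")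
  case True
  let ?m = "min (f_j (sqrt t1) x1 y1) (f_j (sqrt t2) x2 y2)"
  have c: "u* sqrt(t1*x1*y1) + (1-u)* sqrt(t2*x2*y2)
     \<le> sqrt((u*t1+(1-u)*t2)*(u*x1+(1-u)*x2)*(u*y1+(1-u)*y2))"
    using conc3[OF nn True] .
  have tm: "0 \<le> u*t1+(1-u)*t2" "0 \<le> u*x1+(1-u)*x2" "0 \<le> u*y1+(1-u)*y2"
    using nn by auto
  have "?m = u*?m + (1-u)*?m" by (simp add: algebra_simps)
  also have "\<dots> \<le> u*f_j (sqrt t1) x1 y1 + (1-u)*f_j (sqrt t2) x2 y2"
    using nn by (intro add_mono mult_left_mono) auto
  also have "\<dots> = (u*x1+(1-u)*x2) + (u*y1+(1-u)*y2)
        + 2*(u* sqrt(t1*x1*y1) + (1-u)* sqrt(t2*x2*y2))"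
    using nn by (simp add: fj_eq algebra_simps)
  also have "\<dots> \<le> f_j (sqrt (u*t1+(1-u)*t2)) (u*x1+(1-u)*x2) (u*y1+(1-u)*y2)"
    using c by (simp add: fj_eq[OF tm])
  finally show ?thesis .
next
  case False
  hence a: "(x1-x2)*(y1-y2) > 0" "(t1-t2)*(y1-y2) > 0" "(t1-t2)*(x1-x2) > 0" by auto
  have "(t2 \<le> t1 \<and> x2 \<le> x1 \<and> y2 \<le> y1) \<or> (t1 \<le> t2 \<and> x1 \<le> x2 \<and> y1 \<le> y2)"
    using a by (auto simp: zero_less_mult_iff)
  thus ?thesis
  proof
    assume h: "t2 \<le> t1 \<and> x2 \<le> x1 \<and> y2 \<le> y1"
    have "f_j (sqrt t2) x2 y2 \<le> f_j (sqrt (u*t1+(1-u)*t2)) (u*x1+(1-u)*x2) (u*y1+(1-u)*y2)"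
    proof (rule fj_mono)
      show "t2 \<le> u*t1+(1-u)*t2" using h nn mult_left_mono[of t2 t1 u] by (simp add: algebra_simps)
      show "x2 \<le> u*x1+(1-u)*x2" using h nn mult_left_mono[of x2 x1 u] by (simp add: algebra_simps)
      show "y2 \<le> u*y1+(1-u)*y2" using h nn mult_left_mono[of y2 y1 u] by (simp add: algebra_simps)
    qed (use nn in auto)
    thus ?thesis by linarith
  next
    assume h: "t1 \<le> t2 \<and> x1 \<le> x2 \<and> y1 \<le> y2"
    have "f_j (sqrt t1) x1 y1 \<le> f_j (sqrt (u*t1+(1-u)*t2)) (u*x1+(1-u)*x2) (u*y1+(1-u)*y2)"
    proof (rule fj_mono)
      have "0 \<le> 1-u" using nn by simp
      show "t1 \<le> u*t1+(1-u)*t2" using h mult_left_mono[OF _ \<open>0 \<le> 1-u\<close>, of t1 t2] by (simp add: algebra_simps)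
      show "x1 \<le> u*x1+(1-u)*x2" using h mult_left_mono[OF _ \<open>0 \<le> 1-u\<close>, of x1 x2] by (simp add: algebra_simps)
      show "y1 \<le> u*y1+(1-u)*y2" using h mult_left_mono[OF _ \<open>0 \<le> 1-u\<close>, of y1 y2] by (simp add: algebra_simps)
    qed (use nn in auto)
    thus ?thesis by linarith
  qed
qed


lemma prod_qc:
  fixes a1 a2 b1 b2 u :: real
  assumes nn: "0\<le>a1" "0\<le>a2" "0\<le>b1" "0\<le>b2" "0\<le>u" "u\<le>1"
  shows "min (a1*b1) (a2*b2) \<le> (u*a1+(1-u)*a2)*(u*b1+(1-u)*b2)"
proof (cases "(a1-a2)*(b1-b2) \<le> 0")
  case True
  have "min (a1*b1) (a2*b2) = u*min (a1*b1) (a2*b2) + (1-u)*min (a1*b1) (a2*b2)"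
    by (simp add: algebra_simps)
  also have "\<dots> \<le> u*(a1*b1) + (1-u)*(a2*b2)"
    using nn by (intro add_mono mult_left_mono) auto
  also have "\<dots> \<le> (u*a1+(1-u)*a2)*(u*b1+(1-u)*b2)" using opp_prod[OF True nn(5,6)] .
  finally show ?thesis .
next
  case False
  hence "(a2 \<le> a1 \<and> b2 \<le> b1) \<or> (a1 \<le> a2 \<and> b1 \<le> b2)"
    by (auto simp: not_le zero_less_mult_iff)
  have v: "0 \<le> 1-u" using nn by simp
  show ?thesis
  proof (cases "a2 \<le> a1 \<and> b2 \<le> b1")
    case True
    have "a2 \<le> u*a1+(1-u)*a2" using True nn mult_left_mono[of a2 a1 u] by (simp add: algebra_simps)
    moreover have "b2 \<le> u*b1+(1-u)*b2" using True nn mult_left_mono[of b2 b1 u] by (simp add: algebra_simps)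
    ultimately have "a2*b2 \<le> (u*a1+(1-u)*a2)*(u*b1+(1-u)*b2)"
      using nn by (intro mult_mono) auto
    thus ?thesis by linarith
  next
    case False
    hence h: "a1 \<le> a2 \<and> b1 \<le> b2" using \<open>(a2 \<le> a1 \<and> b2 \<le> b1) \<or> _\<close> by blast
    have "a1 \<le> u*a1+(1-u)*a2" using h mult_left_mono[OF _ v, of a1 a2] by (simp add: algebra_simps)
    moreover have "b1 \<le> u*b1+(1-u)*b2" using h mult_left_mono[OF _ v, of b1 b2] by (simp add: algebra_simps)
    ultimately have "a1*b1 \<le> (u*a1+(1-u)*a2)*(u*b1+(1-u)*b2)"
      using nn by (intro mult_mono) auto
    thus ?thesis by linarith
  qed
qed

lemma Ccap_mono: "0 \<le> x \<Longrightarrow> x \<le> y \<Longrightarrow> Ccap x \<le> Ccap y"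
  by (simp add: Ccap_def)

lemma Ccap_min:
  assumes "0 \<le> x1" "0 \<le> x2" "min x1 x2 \<le> y"
  shows "min (Ccap x1) (Ccap x2) \<le> Ccap y"
proof (cases "x1 \<le> x2")
  case True
  hence "Ccap x1 \<le> Ccap y" using assms by (intro Ccap_mono) auto
  thus ?thesis by linarith
next
  case False
  hence "Ccap x2 \<le> Ccap y" using assms by (intro Ccap_mono) auto
  thus ?thesis by linarith
qed

lemma Min_img_min:
  fixes e1 e2 e :: "nat \<Rightarrow> real"
  assumes "finite I" "I \<noteq> {}" "\<And>j. j \<in> I \<Longrightarrow> min (e1 j) (e2 j) \<le> e j"
  shows "min (Min (e1 ` I)) (Min (e2 ` I)) \<le> Min (e ` I)"
proof (rule Min.boundedI)
  show "finite (e ` I)" "e ` I \<noteq> {}" using assms by auto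
  fix a assume "a \<in> e ` I"
  then obtain j where j: "j \<in> I" "a = e j" by auto
  have "Min (e1 ` I) \<le> e1 j" "Min (e2 ` I) \<le> e2 j" using assms j by auto
  thus "min (Min (e1 ` I)) (Min (e2 ` I)) \<le> a" using assms(3)[OF j(1)] j by linarith
qed

lemma minmin:
  fixes a b c d e h :: real
  shows "min a b \<le> e \<Longrightarrow> min c d \<le> h \<Longrightarrow> min (min a c) (min b d) \<le> min e h"
  by linarith

lemma fj_nonneg: "0\<le>t \<Longrightarrow> 0\<le>x \<Longrightarrow> 0\<le>y \<Longrightarrow> 0 \<le> f_j (sqrt t) x y"
  by (simp add: fj_eq)

theorem corollary2:
  fixes N :: nat and a_sr :: real and a_sd a_rd :: "nat \<Rightarrow> real"
  assumes "N \<ge> 1"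
  shows "quasi_concave_on {(t, Ps, Pr). 0 \<le> t \<and> t \<le> 1 \<and> 0 \<le> Ps \<and> 0 \<le> Pr}
           (R_DF_P N a_sr a_sd a_rd)"
  unfolding quasi_concave_on_def
proof (intro ballI allI impI)
  fix p q :: "real \<times> real \<times> real" and u :: real
  assume pS: "p \<in> {(t, Ps, Pr). 0 \<le> t \<and> t \<le> 1 \<and> 0 \<le> Ps \<and> 0 \<le> Pr}"
    and qS: "q \<in> {(t, Ps, Pr). 0 \<le> t \<and> t \<le> 1 \<and> 0 \<le> Ps \<and> 0 \<le> Pr}"
    and u: "0 \<le> u \<and> u \<le> 1"
  obtain t1 P1 Q1 where p: "p = (t1,P1,Q1)" by (cases p) auto
  obtain t2 P2 Q2 where q: "q = (t2,P2,Q2)" by (cases q) auto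
  have h1: "0 \<le> t1" "t1 \<le> 1" "0 \<le> P1" "0 \<le> Q1" using pS p by auto
  have h2: "0 \<le> t2" "t2 \<le> 1" "0 \<le> P2" "0 \<le> Q2" using qS q by auto
  have u0: "0 \<le> u" "u \<le> 1" using u by auto
  have comb: "u *\<^sub>R p + (1-u) *\<^sub>R q = (u*t1+(1-u)*t2, u*P1+(1-u)*P2, u*Q1+(1-u)*Q2)"
    by (simp add: p q)
  have lin: "\<And>c::real. c * (u*P1+(1-u)*P2) = u*(c*P1)+(1-u)*(c*P2)"
            "\<And>c::real. c * (u*Q1+(1-u)*Q2) = u*(c*Q1)+(1-u)*(c*Q2)"
    by (simp_all add: algebra_simps)
  let ?tm = "u*t1+(1-u)*t2"
  have gsq: "\<And>t z. 0 \<le> t \<Longrightarrow> g_star (sqrt t) z = (1-t)*z" by (simp add: g_star_def)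
  have gq: "min (g_star (sqrt t1) (a_sr^2*P1)) (g_star (sqrt t2) (a_sr^2*P2))
        \<le> g_star (sqrt ?tm) (a_sr^2*(u*P1+(1-u)*P2))"
  proof -
    have "?tm \<ge> 0" using h1 h2 u0 by simp
    have e: "1 - ?tm = u*(1-t1)+(1-u)*(1-t2)" by (simp add: algebra_simps)
    show ?thesis
      unfolding gsq[OF h1(1)] gsq[OF h2(1)] gsq[OF \<open>?tm \<ge> 0\<close>] e lin
      using h1 h2 u0 by (intro prod_qc) auto
  qed
  have g_nn: "0 \<le> g_star (sqrt t1) (a_sr^2*P1)" "0 \<le> g_star (sqrt t2) (a_sr^2*P2)"
    using h1 h2 by (simp_all add: gsq)
  show "min (R_DF_P N a_sr a_sd a_rd p) (R_DF_P N a_sr a_sd a_rd q)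
        \<le> R_DF_P N a_sr a_sd a_rd (u *\<^sub>R p + (1 - u) *\<^sub>R q)"
    unfolding comb unfolding p q R_DF_P_def R_DF_def prod.case
  proof (rule Min_img_min)
    show "finite {1..N}" "{1..N} \<noteq> {}" using assms by auto
    fix j
    have fq: "min (f_j (sqrt t1) (a_sd j^2*P1) (a_rd j^2*Q1)) (f_j (sqrt t2) (a_sd j^2*P2) (a_rd j^2*Q2))
        \<le> f_j (sqrt ?tm) (a_sd j^2*(u*P1+(1-u)*P2)) (a_rd j^2*(u*Q1+(1-u)*Q2))"
      unfolding lin using h1 h2 u0 by (intro fj_qc) auto
    have f_nn: "0 \<le> f_j (sqrt t1) (a_sd j^2*P1) (a_rd j^2*Q1)"
         "0 \<le> f_j (sqrt t2) (a_sd j^2*P2) (a_rd j^2*Q2)"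
      using h1 h2 by (simp_all add: fj_nonneg)
    have A: "min (Ccap (f_j (sqrt t1) (a_sd j^2*P1) (a_rd j^2*Q1))) (Ccap (f_j (sqrt t2) (a_sd j^2*P2) (a_rd j^2*Q2)))
        \<le> Ccap (f_j (sqrt ?tm) (a_sd j^2*(u*P1+(1-u)*P2)) (a_rd j^2*(u*Q1+(1-u)*Q2)))"
      using Ccap_min[OF f_nn fq] .
    have B: "min (Ccap (g_star (sqrt t1) (a_sr^2*P1))) (Ccap (g_star (sqrt t2) (a_sr^2*P2)))
        \<le> Ccap (g_star (sqrt ?tm) (a_sr^2*(u*P1+(1-u)*P2)))"
      using Ccap_min[OF g_nn gq] .
    show "min (min (Ccap (f_j (sqrt t1) ((\<lambda>j. (a_sd j)\<^sup>2 * P1) j) ((\<lambda>j. (a_rd j)\<^sup>2 * Q1) j)))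
                 (Ccap (g_star (sqrt t1) ((a_sr)\<^sup>2 * P1))))
            (min (Ccap (f_j (sqrt t2) ((\<lambda>j. (a_sd j)\<^sup>2 * P2) j) ((\<lambda>j. (a_rd j)\<^sup>2 * Q2) j)))
                 (Ccap (g_star (sqrt t2) ((a_sr)\<^sup>2 * P2))))
        \<le> min (Ccap (f_j (sqrt ?tm) ((\<lambda>j. (a_sd j)\<^sup>2 * (u*P1+(1-u)*P2)) j) ((\<lambda>j. (a_rd j)\<^sup>2 * (u*Q1+(1-u)*Q2)) j)))
                 (Ccap (g_star (sqrt ?tm) ((a_sr)\<^sup>2 * (u*P1+(1-u)*P2))))"
      using minmin[OF A B] by simp
  qed
qed

end
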